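(* Let $L$ be a finite-dimensional Lie superalgebra over a field of characteristic different from $2,3$, and let $(T_1,\lambda_1)$ and $(T_2,\lambda_2)$ be two universal elements of $C(L)$. Then $T_1\cong T_2$.
   Context: Lie superalgebras: $\mathbb{Z}_2$-graded algebras with graded skew-symmetric bracket satisfying the graded Jacobi identity; $\mathrm{Hom}(K,L)$ denotes Lie superalgebra homomorphisms (even, bracket-preserving). $Z(K)$ is the center, $K'=[K,K]$. $C(L)$ is the class of pairs $(K,\lambda)$ with $K$ a Lie superalgebra and $\lambda\in\mathrm{Hom}(K,L)$ surjective with $\mathrm{Ker}(\lambda)\subseteq K'\cap Z(K)$. An element $(T,\sigma)\in C(L)$ is universal if for every $(K,\lambda)\in C(L)$ there exists $\tau\in\mathrm{Hom}(T,K)$ with $\lambda\circ\tau=\sigma$. *)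

theory Defs
  imports Main
begin

text \<open>A Lie superalgebra over a field 'k, represented by a carrier subset of an
  additive group type 'a (the vector addition and zero are those of the type),
  together with its even and odd parts, scalar multiplication and bracket.\<close>

record ('k, 'a) lsa =
  lcar :: "'a set"
  lev  :: "'a set"
  lod  :: "'a set"
  lsc  :: "'k \<Rightarrow> 'a \<Rightarrow> 'a"
  lbr  :: "'a \<Rightarrow> 'a \<Rightarrow> 'a"

definition grade :: "('k, 'a) lsa \<Rightarrow> nat \<Rightarrow> 'a set" where
  "grade K i = (if i = 0 then lev K else lod K)"

definition subspace_of :: "('k::field, 'a::ab_group_add) lsa \<Rightarrow> 'a set \<Rightarrow> bool" where
  "subspace_of K S \<longleftrightarrow> S \<subseteq> lcar K \<and> 0 \<in> S \<and>
     (\<forall>x\<in>S. \<forall>y\<in>S. x + y \<in> S) \<and> (\<forall>c. \<forall>x\<in>S. lsc K c x \<in> S)"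

definition lie_superalgebra :: "('k::field, 'a::ab_group_add) lsa \<Rightarrow> bool" where
  "lie_superalgebra K \<longleftrightarrow>
     \<comment> \<open>vector space over 'k\<close>
     subspace_of K (lcar K) \<and>
     (\<forall>c. \<forall>x\<in>lcar K. \<forall>y\<in>lcar K. lsc K c (x + y) = lsc K c x + lsc K c y) \<and>
     (\<forall>a b. \<forall>x\<in>lcar K. lsc K (a + b) x = lsc K a x + lsc K b x) \<and>
     (\<forall>a b. \<forall>x\<in>lcar K. lsc K (a * b) x = lsc K a (lsc K b x)) \<and>
     (\<forall>x\<in>lcar K. lsc K 1 x = x) \<and>
     \<comment> \<open>Z_2-grading: carrier = even (+) odd\<close>
     subspace_of K (lev K) \<and> subspace_of K (lod K) \<and>
     lev K \<inter> lod K = {0} \<and>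
     lcar K = {x + y | x y. x \<in> lev K \<and> y \<in> lod K} \<and>
     \<comment> \<open>bilinear bracket\<close>
     (\<forall>x\<in>lcar K. \<forall>y\<in>lcar K. lbr K x y \<in> lcar K) \<and>
     (\<forall>x\<in>lcar K. \<forall>y\<in>lcar K. \<forall>z\<in>lcar K. lbr K (x + y) z = lbr K x z + lbr K y z) \<and>
     (\<forall>x\<in>lcar K. \<forall>y\<in>lcar K. \<forall>z\<in>lcar K. lbr K x (y + z) = lbr K x y + lbr K x z) \<and>
     (\<forall>c. \<forall>x\<in>lcar K. \<forall>y\<in>lcar K. lbr K (lsc K c x) y = lsc K c (lbr K x y)) \<and>
     (\<forall>c. \<forall>x\<in>lcar K. \<forall>y\<in>lcar K. lbr K x (lsc K c y) = lsc K c (lbr K x y)) \<and>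
     \<comment> \<open>bracket respects the grading\<close>
     (\<forall>i<2. \<forall>j<2. \<forall>x\<in>grade K i. \<forall>y\<in>grade K j. lbr K x y \<in> grade K ((i + j) mod 2)) \<and>
     \<comment> \<open>graded skew-symmetry\<close>
     (\<forall>i<2. \<forall>j<2. \<forall>x\<in>grade K i. \<forall>y\<in>grade K j.
        lbr K x y = - lsc K ((-1) ^ (i * j)) (lbr K y x)) \<and>
     \<comment> \<open>graded Jacobi identity\<close>
     (\<forall>i<2. \<forall>j<2. \<forall>k<2. \<forall>x\<in>grade K i. \<forall>y\<in>grade K j. \<forall>z\<in>grade K k.
        lsc K ((-1) ^ (i * k)) (lbr K x (lbr K y z)) +
        lsc K ((-1) ^ (j * i)) (lbr K y (lbr K z x)) +
        lsc K ((-1) ^ (k * j)) (lbr K z (lbr K x y)) = 0)"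

definition fin_dim :: "('k::field, 'a::ab_group_add) lsa \<Rightarrow> bool" where
  "fin_dim K \<longleftrightarrow> (\<exists>S. finite S \<and> S \<subseteq> lcar K \<and>
      lcar K = {(\<Sum>v\<in>S. lsc K (c v) v) | c. True})"

definition lsa_hom :: "('k::field, 'a::ab_group_add) lsa \<Rightarrow> ('k, 'b::ab_group_add) lsa
    \<Rightarrow> ('a \<Rightarrow> 'b) \<Rightarrow> bool" where
  "lsa_hom K L f \<longleftrightarrow>
     f ` lcar K \<subseteq> lcar L \<and> f ` lev K \<subseteq> lev L \<and> f ` lod K \<subseteq> lod L \<and>
     (\<forall>x\<in>lcar K. \<forall>y\<in>lcar K. f (x + y) = f x + f y) \<and>
     (\<forall>c. \<forall>x\<in>lcar K. f (lsc K c x) = lsc L c (f x)) \<and>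
     (\<forall>x\<in>lcar K. \<forall>y\<in>lcar K. f (lbr K x y) = lbr L (f x) (f y))"

definition lsa_iso :: "('k::field, 'a::ab_group_add) lsa \<Rightarrow> ('k, 'b::ab_group_add) lsa \<Rightarrow> bool" where
  "lsa_iso K L \<longleftrightarrow> (\<exists>f. lsa_hom K L f \<and> bij_betw f (lcar K) (lcar L))"

definition center :: "('k::field, 'a::ab_group_add) lsa \<Rightarrow> 'a set" where
  "center K = {z \<in> lcar K. \<forall>x\<in>lcar K. lbr K z x = 0}"

definition derived :: "('k::field, 'a::ab_group_add) lsa \<Rightarrow> 'a set" where
  "derived K = {(\<Sum>i<n. lsc K (c i) (lbr K (a i) (b i))) | (n::nat) c a b.
                  \<forall>i<n. a i \<in> lcar K \<and> b i \<in> lcar K}"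

definition lsa_ker :: "('k, 'a::ab_group_add) lsa \<Rightarrow> ('a \<Rightarrow> 'b::zero) \<Rightarrow> 'a set" where
  "lsa_ker K f = {x \<in> lcar K. f x = 0}"

definition in_C :: "('k::field, 'l::ab_group_add) lsa \<Rightarrow> ('k, 'a::ab_group_add) lsa
    \<Rightarrow> ('a \<Rightarrow> 'l) \<Rightarrow> bool" where
  "in_C L K lam \<longleftrightarrow> lie_superalgebra K \<and> lsa_hom K L lam \<and> lam ` lcar K = lcar L \<and>
     lsa_ker K lam \<subseteq> derived K \<inter> center K"

text \<open>Universality of (T,sigma) in C(L), with respect to all (K,lambda) in C(L) whose
  Lie superalgebra K lives in the type 'c (HOL cannot quantify over types).\<close>
definition universal_wrt :: "'c::ab_group_add itself \<Rightarrow> ('k::field, 'l::ab_group_add) lsa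
    \<Rightarrow> ('k, 'a::ab_group_add) lsa \<Rightarrow> ('a \<Rightarrow> 'l) \<Rightarrow> bool" where
  "universal_wrt _ L T sig \<longleftrightarrow> in_C L T sig \<and>
     (\<forall>(K :: ('k, 'c) lsa) lam. in_C L K lam \<longrightarrow>
        (\<exists>tau. lsa_hom T K tau \<and> (\<forall>x\<in>lcar T. lam (tau x) = sig x)))"

end

theory Submission
  imports Defs
begin

lemma lsD:
  assumes "lie_superalgebra K"
  shows lsD_car: "subspace_of K (lcar K)"
  and lsD_scadd: "\<forall>c. \<forall>x\<in>lcar K. \<forall>y\<in>lcar K. lsc K c (x + y) = lsc K c x + lsc K c y"
  and lsD_addsc: "\<forall>a b. \<forall>x\<in>lcar K. lsc K (a + b) x = lsc K a x + lsc K b x"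
  and lsD_one: "\<forall>x\<in>lcar K. lsc K 1 x = x"
  and lsD_ev: "subspace_of K (lev K)"
  and lsD_od: "subspace_of K (lod K)"
  and lsD_int: "lev K \<inter> lod K = {0}"
  and lsD_dec: "lcar K = {x + y | x y. x \<in> lev K \<and> y \<in> lod K}"
  and lsD_br: "\<forall>x\<in>lcar K. \<forall>y\<in>lcar K. lbr K x y \<in> lcar K"
  and lsD_bl: "\<forall>x\<in>lcar K. \<forall>y\<in>lcar K. \<forall>z\<in>lcar K. lbr K (x + y) z = lbr K x z + lbr K y z"
  and lsD_br2: "\<forall>x\<in>lcar K. \<forall>y\<in>lcar K. \<forall>z\<in>lcar K. lbr K x (y + z) = lbr K x y + lbr K x z"
  and lsD_bsc1: "\<forall>c. \<forall>x\<in>lcar K. \<forall>y\<in>lcar K. lbr K (lsc K c x) y = lsc K c (lbr K x y)"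
  and lsD_bsc2: "\<forall>c. \<forall>x\<in>lcar K. \<forall>y\<in>lcar K. lbr K x (lsc K c y) = lsc K c (lbr K x y)"
  and lsD_gr: "\<forall>i<2. \<forall>j<2. \<forall>x\<in>grade K i. \<forall>y\<in>grade K j. lbr K x y \<in> grade K ((i + j) mod 2)"
  and lsD_skew: "\<forall>i<2. \<forall>j<2. \<forall>x\<in>grade K i. \<forall>y\<in>grade K j.
        lbr K x y = - lsc K ((-1) ^ (i * j)) (lbr K y x)"
  using assms unfolding lie_superalgebra_def apply -
  apply (elim conjE) apply assumption
  apply (elim conjE) apply assumption
  apply (elim conjE) apply assumption
  apply (elim conjE) apply assumption
  apply (elim conjE) apply assumption
  apply (elim conjE) apply assumption
  apply (elim conjE) apply assumption
  apply (elim conjE) apply assumption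
  apply (elim conjE) apply assumption
  apply (elim conjE) apply assumption
  apply (elim conjE) apply assumption
  apply (elim conjE) apply assumption
  apply (elim conjE) apply assumption
  apply (elim conjE) apply assumption
  apply (elim conjE) apply assumption
  done

lemma ls_add: "lie_superalgebra K \<Longrightarrow> x \<in> lcar K \<Longrightarrow> y \<in> lcar K \<Longrightarrow> x + y \<in> lcar K"
  using lsD_car unfolding subspace_of_def by blast
lemma ls_sc: "lie_superalgebra K \<Longrightarrow> x \<in> lcar K \<Longrightarrow> lsc K c x \<in> lcar K"
  using lsD_car unfolding subspace_of_def by blast
lemma ls_zero: "lie_superalgebra K \<Longrightarrow> 0 \<in> lcar K"
  using lsD_car unfolding subspace_of_def by blast
lemma ls_br: "lie_superalgebra K \<Longrightarrow> x \<in> lcar K \<Longrightarrow> y \<in> lcar K \<Longrightarrow> lbr K x y \<in> lcar K"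
  using lsD_br by blast
lemma ls_ev: "lie_superalgebra K \<Longrightarrow> lev K \<subseteq> lcar K"
  using lsD_ev unfolding subspace_of_def by blast
lemma ls_od: "lie_superalgebra K \<Longrightarrow> lod K \<subseteq> lcar K"
  using lsD_od unfolding subspace_of_def by blast
lemma ls_bl: "lie_superalgebra K \<Longrightarrow> x \<in> lcar K \<Longrightarrow> y \<in> lcar K \<Longrightarrow> z \<in> lcar K \<Longrightarrow> lbr K (x + y) z = lbr K x z + lbr K y z"
  using lsD_bl by blast
lemma ls_br2: "lie_superalgebra K \<Longrightarrow> x \<in> lcar K \<Longrightarrow> y \<in> lcar K \<Longrightarrow> z \<in> lcar K \<Longrightarrow> lbr K x (y + z) = lbr K x y + lbr K x z"
  using lsD_br2 by blast

lemma ls_sc0: assumes "lie_superalgebra K" "x \<in> lcar K" shows "lsc K 0 x = 0"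
proof -
  have "lsc K (0+0) x = lsc K 0 x + lsc K 0 x" using assms lsD_addsc by blast
  then show ?thesis by simp
qed

lemma ls_scz: assumes "lie_superalgebra K" shows "lsc K c 0 = 0"
proof -
  have "lsc K c (0+0) = lsc K c 0 + lsc K c 0" using lsD_scadd[OF assms] ls_zero[OF assms]
    by blast
  then show ?thesis by simp
qed

lemma ls_neg: assumes "lie_superalgebra K" "x \<in> lcar K" shows "lsc K (-1) x = - x"
proof -
  have "lsc K (-1 + 1) x = lsc K (-1) x + lsc K 1 x" using assms lsD_addsc by blast
  moreover have "lsc K 1 x = x" using assms lsD_one by blast
  ultimately have "lsc K (-1) x + x = 0" using ls_sc0[OF assms] by simp
  then show ?thesis by (simp add: eq_neg_iff_add_eq_0)
qed

lemma ls_minus: assumes "lie_superalgebra K" "x \<in> lcar K" "y \<in> lcar K" shows "x - y \<in> lcar K"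
  using ls_add[OF assms(1,2) ls_sc[OF assms(1,3), of "-1"]] ls_neg[OF assms(1,3)] by simp

lemma ls_grade_neg: assumes "lie_superalgebra K" "x \<in> grade K i" shows "- x \<in> grade K i"
proof -
  have xc: "x \<in> lcar K" using assms ls_ev ls_od unfolding grade_def by (auto split: if_splits)
  have "lsc K (-1) x \<in> grade K i" using assms lsD_ev[OF assms(1)] lsD_od[OF assms(1)]
    unfolding grade_def subspace_of_def by (auto split: if_splits)
  then show ?thesis using ls_neg[OF assms(1) xc] by simp
qed

lemma hom_add: "lsa_hom K L f \<Longrightarrow> x \<in> lcar K \<Longrightarrow> y \<in> lcar K \<Longrightarrow> f (x + y) = f x + f y"
  unfolding lsa_hom_def by blast
lemma hom_sc: "lsa_hom K L f \<Longrightarrow> x \<in> lcar K \<Longrightarrow> f (lsc K c x) = lsc L c (f x)"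
  unfolding lsa_hom_def by blast
lemma hom_br: "lsa_hom K L f \<Longrightarrow> x \<in> lcar K \<Longrightarrow> y \<in> lcar K \<Longrightarrow> f (lbr K x y) = lbr L (f x) (f y)"
  unfolding lsa_hom_def by blast
lemma hom_car: "lsa_hom K L f \<Longrightarrow> x \<in> lcar K \<Longrightarrow> f x \<in> lcar L"
  unfolding lsa_hom_def by blast

lemma hom_minus: assumes "lie_superalgebra K" "lie_superalgebra L" "lsa_hom K L f"
  "x \<in> lcar K" "y \<in> lcar K" shows "f (x - y) = f x - f y"
proof -
  have "f (x + lsc K (-1) y) = f x + lsc L (-1) (f y)"
    using hom_add[OF assms(3) assms(4) ls_sc[OF assms(1,5)]] hom_sc[OF assms(3,5)] by simp
  then show ?thesis using ls_neg[OF assms(1,5)] ls_neg[OF assms(2) hom_car[OF assms(3,5)]] by simp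
qed

lemma hom_comp: assumes "lsa_hom K M f" "lsa_hom M N g" shows "lsa_hom K N (g \<circ> f)"
  using assms unfolding lsa_hom_def by (auto simp: image_subset_iff)

lemma center_comm_hom:
  assumes K: "lie_superalgebra K" and z: "z \<in> center K" and i: "i < 2" and w: "w \<in> grade K i"
    and zdec: "z = z0 + z1" and z0: "z0 \<in> lev K" and z1: "z1 \<in> lod K"
  shows "lbr K z0 w = 0 \<and> lbr K z1 w = 0"
proof -
  have gs: "grade K 0 = lev K" "grade K 1 = lod K" unfolding grade_def by auto
  have wc: "w \<in> lcar K" using w ls_ev[OF K] ls_od[OF K] unfolding grade_def by (auto split: if_splits)
  have z0c: "z0 \<in> lcar K" and z1c: "z1 \<in> lcar K" using z0 z1 ls_ev[OF K] ls_od[OF K] by auto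
  have "lbr K z w = 0" using z wc unfolding center_def by auto
  moreover have "lbr K z w = lbr K z0 w + lbr K z1 w"
    using ls_bl[OF K z0c z1c wc] zdec by simp
  ultimately have sum0: "lbr K z0 w + lbr K z1 w = 0" by simp
  have a: "lbr K z0 w \<in> grade K i"
    using lsD_gr[OF K, rule_format, of 0 i z0 w] z0 w i gs by simp
  have b: "lbr K z1 w \<in> grade K ((1 + i) mod 2)"
    using lsD_gr[OF K, rule_format, of 1 i z1 w] z1 w i gs by simp
  have nb: "- lbr K z1 w \<in> grade K ((1 + i) mod 2)" using ls_grade_neg[OF K b] .
  have eq: "lbr K z0 w = - lbr K z1 w" using sum0 by (simp add: eq_neg_iff_add_eq_0)
  have int: "lev K \<inter> lod K = {0}" using lsD_int[OF K] .
  have "lbr K z0 w \<in> lev K \<inter> lod K"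
  proof -
    have "i = 0 \<or> i = 1" using i by auto
    then show ?thesis using a nb eq unfolding grade_def by auto
  qed
  then have e0: "lbr K z0 w = 0" using int by blast
  then have e1: "lbr K z1 w = 0" using sum0 by simp
  show ?thesis using e0 e1 by simp
qed

lemma skew_zero:
  assumes K: "lie_superalgebra K" and "i < 2" "j < 2" "w \<in> grade K i" "u \<in> grade K j"
    and "lbr K u w = 0"
  shows "lbr K w u = 0"
proof -
  have "lbr K w u = - lsc K ((-1) ^ (i * j)) (lbr K u w)"
    using lsD_skew[OF K, rule_format, of i j w u] assms by simp
  then show ?thesis using assms(6) ls_scz[OF K] by simp
qed

lemma center_left:
  assumes K: "lie_superalgebra K" and z: "z \<in> center K" and x: "x \<in> lcar K"
  shows "lbr K x z = 0"
proof -
  have gs: "grade K 0 = lev K" "grade K 1 = lod K" unfolding grade_def by auto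
  have zc: "z \<in> lcar K" using z unfolding center_def by auto
  obtain z0 z1 where zd: "z = z0 + z1" and z0: "z0 \<in> lev K" and z1: "z1 \<in> lod K"
    using zc lsD_dec[OF K] by blast
  obtain x0 x1 where xd: "x = x0 + x1" and x0: "x0 \<in> lev K" and x1: "x1 \<in> lod K"
    using x lsD_dec[OF K] by blast
  have c: "z0 \<in> lcar K" "z1 \<in> lcar K" "x0 \<in> lcar K" "x1 \<in> lcar K"
    using z0 z1 x0 x1 ls_ev[OF K] ls_od[OF K] by auto
  have h: "lbr K z0 w = 0 \<and> lbr K z1 w = 0" if "i < 2" "w \<in> grade K i" for i w
    using center_comm_hom[OF K z that zd z0 z1] .
  have hx0: "lbr K z0 x0 = 0 \<and> lbr K z1 x0 = 0" using h[of 0 x0] gs x0 by simp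
  have hx1: "lbr K z0 x1 = 0 \<and> lbr K z1 x1 = 0" using h[of 1 x1] gs x1 by simp
  have "lbr K x0 z0 = 0" using skew_zero[OF K, of 0 0 x0 z0] hx0 gs x0 z0 by simp
  moreover have "lbr K x0 z1 = 0" using skew_zero[OF K, of 0 1 x0 z1] hx0 gs x0 z1 by simp
  moreover have "lbr K x1 z0 = 0" using skew_zero[OF K, of 1 0 x1 z0] hx1 gs x1 z0 by simp
  moreover have "lbr K x1 z1 = 0" using skew_zero[OF K, of 1 1 x1 z1] hx1 gs x1 z1 by simp
  moreover have "lbr K x z = lbr K x0 z0 + lbr K x0 z1 + (lbr K x1 z0 + lbr K x1 z1)"
    using xd zd ls_bl[OF K c(3) c(4) zc] ls_br2[OF K c(3) c(1) c(2)] ls_br2[OF K c(4) c(1) c(2)] by simp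
  ultimately show ?thesis by simp
qed

lemma center_shift:
  assumes K: "lie_superalgebra K" and x: "x \<in> lcar K" and y: "y \<in> lcar K"
    and z: "z \<in> center K" and z': "z' \<in> center K"
  shows "lbr K (x + z) (y + z') = lbr K x y"
proof -
  have zc: "z \<in> lcar K" "z' \<in> lcar K" using z z' unfolding center_def by auto
  have "lbr K (x + z) (y + z') = lbr K x (y + z') + lbr K z (y + z')"
    using ls_bl[OF K x zc(1) ls_add[OF K y zc(2)]] .
  also have "lbr K z (y + z') = 0" using z ls_add[OF K y zc(2)] unfolding center_def by auto
  also have "lbr K x (y + z') = lbr K x y + lbr K x z'" using ls_br2[OF K x y zc(2)] .
  also have "lbr K x z' = 0" using center_left[OF K z' x] .
  finally show ?thesis by simp
qed

lemma hom_zero: assumes K: "lie_superalgebra K" and f: "lsa_hom K L f" shows "f 0 = 0"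
proof -
  have "f (0 + 0) = f 0 + f 0" using hom_add[OF f ls_zero[OF K] ls_zero[OF K]] .
  then show ?thesis by simp
qed

lemma endo_inj:
  assumes K: "lie_superalgebra K" and L: "lie_superalgebra L" and s: "lsa_hom K L s"
    and ker: "lsa_ker K s \<subseteq> derived K \<inter> center K"
    and p: "lsa_hom K K p" and pfix: "\<forall>x\<in>lcar K. s (p x) = s x"
  shows "inj_on p (lcar K)"
proof -
  have dz: "p x - x \<in> center K" if x: "x \<in> lcar K" for x
  proof -
    have pc: "p x \<in> lcar K" using hom_car[OF p x] .
    have "s (p x - x) = s (p x) - s x" using hom_minus[OF K L s pc x] .
    then have "s (p x - x) = 0" using pfix x by simp
    then have "p x - x \<in> lsa_ker K s" using ls_minus[OF K pc x] unfolding lsa_ker_def by auto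
    then show ?thesis using ker by auto
  qed
  have br: "p (lbr K x y) = lbr K x y" if x: "x \<in> lcar K" and y: "y \<in> lcar K" for x y
  proof -
    have "p (lbr K x y) = lbr K (p x) (p y)" using hom_br[OF p x y] .
    also have "\<dots> = lbr K (x + (p x - x)) (y + (p y - y))" by simp
    also have "\<dots> = lbr K x y" using center_shift[OF K x y dz[OF x] dz[OF y]] .
    finally show ?thesis .
  qed
  have ind: "\<forall>a b c. (\<forall>i<n. a i \<in> lcar K \<and> b i \<in> lcar K) \<longrightarrow>
      (\<Sum>i<n. lsc K (c i) (lbr K (a i) (b i))) \<in> lcar K \<and>
      p (\<Sum>i<n. lsc K (c i) (lbr K (a i) (b i))) = (\<Sum>i<n. lsc K (c i) (lbr K (a i) (b i)))" for n :: nat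
  proof (induction n)
    case 0
    then show ?case using ls_zero[OF K] hom_zero[OF K p] by simp
  next
    case (Suc n)
    show ?case
    proof (intro allI impI)
      fix a b c assume ab: "\<forall>i<Suc n. a i \<in> lcar K \<and> b i \<in> lcar K"
      let ?S = "\<Sum>i<n. lsc K (c i) (lbr K (a i) (b i))"
      have IH: "?S \<in> lcar K" "p ?S = ?S" using Suc.IH ab by auto
      have an: "a n \<in> lcar K" "b n \<in> lcar K" using ab by auto
      have bc: "lbr K (a n) (b n) \<in> lcar K" using ls_br[OF K an] .
      have tc: "lsc K (c n) (lbr K (a n) (b n)) \<in> lcar K" using ls_sc[OF K bc] .
      have "p (lsc K (c n) (lbr K (a n) (b n))) = lsc K (c n) (lbr K (a n) (b n))"
        using hom_sc[OF p bc] br[OF an] by simp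
      then show "(\<Sum>i<Suc n. lsc K (c i) (lbr K (a i) (b i))) \<in> lcar K \<and>
        p (\<Sum>i<Suc n. lsc K (c i) (lbr K (a i) (b i))) = (\<Sum>i<Suc n. lsc K (c i) (lbr K (a i) (b i)))"
        using IH tc hom_add[OF p IH(1) tc] ls_add[OF K IH(1) tc] by simp
    qed
  qed
  have der: "p x = x" if "x \<in> derived K" for x
    using that ind unfolding derived_def by blast
  show ?thesis
  proof (rule inj_onI)
    fix x y assume x: "x \<in> lcar K" and y: "y \<in> lcar K" and e: "p x = p y"
    have dc: "x - y \<in> lcar K" using ls_minus[OF K x y] .
    have p0: "p (x - y) = 0" using hom_minus[OF K K p x y] e by simp
    have "s (x - y) = s (p (x - y))" using pfix dc by simp
    also have "\<dots> = 0" using p0 hom_zero[OF K s] by simp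
    finally have "x - y \<in> lsa_ker K s" using dc unfolding lsa_ker_def by auto
    then have "p (x - y) = x - y" using ker der by auto
    then show "x = y" using p0 by simp
  qed
qed

lemma hom_surj:
  assumes K1: "lie_superalgebra K1" and K2: "lie_superalgebra K2" and L: "lie_superalgebra L"
    and s1: "lsa_hom K1 L s1" and s1s: "s1 ` lcar K1 = lcar L"
    and s2: "lsa_hom K2 L s2" and ker: "lsa_ker K2 s2 \<subseteq> derived K2 \<inter> center K2"
    and t: "lsa_hom K1 K2 t" and comm: "\<forall>x\<in>lcar K1. s2 (t x) = s1 x"
  shows "t ` lcar K1 = lcar K2"
proof -
  have dec: "\<exists>x\<in>lcar K1. y - t x \<in> center K2 \<and> y - t x \<in> derived K2" if y: "y \<in> lcar K2" for y
  proof -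
    have "s2 y \<in> lcar L" using hom_car[OF s2 y] .
    then have "s2 y \<in> s1 ` lcar K1" using s1s by simp
    then obtain x where x: "x \<in> lcar K1" and sx: "s2 y = s1 x" by (rule imageE)
    have tx: "t x \<in> lcar K2" using hom_car[OF t x] .
    have "s2 (y - t x) = 0" using hom_minus[OF K2 L s2 y tx] comm x sx[symmetric] by simp
    then have "y - t x \<in> lsa_ker K2 s2" using ls_minus[OF K2 y tx] unfolding lsa_ker_def by auto
    then show ?thesis using ker x by blast
  qed
  have br: "lbr K2 y1 y2 \<in> t ` lcar K1" if y1: "y1 \<in> lcar K2" and y2: "y2 \<in> lcar K2" for y1 y2
  proof -
    obtain x1 where x1: "x1 \<in> lcar K1" and z1: "y1 - t x1 \<in> center K2" using dec[OF y1] by blast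
    obtain x2 where x2: "x2 \<in> lcar K1" and z2: "y2 - t x2 \<in> center K2" using dec[OF y2] by blast
    have "lbr K2 y1 y2 = lbr K2 (t x1 + (y1 - t x1)) (t x2 + (y2 - t x2))" by simp
    also have "\<dots> = lbr K2 (t x1) (t x2)"
      using center_shift[OF K2 hom_car[OF t x1] hom_car[OF t x2] z1 z2] .
    also have "\<dots> = t (lbr K1 x1 x2)" using hom_br[OF t x1 x2] by simp
    finally show ?thesis using ls_br[OF K1 x1 x2] by blast
  qed
  have ind: "\<forall>a b c. (\<forall>i<n. a i \<in> lcar K2 \<and> b i \<in> lcar K2) \<longrightarrow>
      (\<Sum>i<n. lsc K2 (c i) (lbr K2 (a i) (b i))) \<in> t ` lcar K1" for n :: nat
  proof (induction n)
    case 0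
    have "t 0 \<in> t ` lcar K1" using ls_zero[OF K1] by (rule imageI)
    then show ?case using hom_zero[OF K1 t] by simp
  next
    case (Suc n)
    show ?case
    proof (intro allI impI)
      fix a b c assume ab: "\<forall>i<Suc n. a i \<in> lcar K2 \<and> b i \<in> lcar K2"
      let ?S = "\<Sum>i<n. lsc K2 (c i) (lbr K2 (a i) (b i))"
      have "\<forall>i<n. a i \<in> lcar K2 \<and> b i \<in> lcar K2" using ab by simp
      then have "?S \<in> t ` lcar K1" using Suc.IH by blast
      then obtain u where u: "u \<in> lcar K1" and tu: "?S = t u" by (rule imageE)
      have an: "a n \<in> lcar K2" "b n \<in> lcar K2" using ab by auto
      obtain v where v: "v \<in> lcar K1" and tv: "lbr K2 (a n) (b n) = t v" using br[OF an] by blast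
      have "lsc K2 (c n) (lbr K2 (a n) (b n)) = t (lsc K1 (c n) v)" using hom_sc[OF t v] tv by simp
      then have "(\<Sum>i<Suc n. lsc K2 (c i) (lbr K2 (a i) (b i))) = t (u + lsc K1 (c n) v)"
        using tu hom_add[OF t u ls_sc[OF K1 v]] by simp
      then show "(\<Sum>i<Suc n. lsc K2 (c i) (lbr K2 (a i) (b i))) \<in> t ` lcar K1"
        using ls_add[OF K1 u ls_sc[OF K1 v]] by blast
    qed
  qed
  have der: "y \<in> t ` lcar K1" if "y \<in> derived K2" for y
    using that ind unfolding derived_def by blast
  show ?thesis
  proof
    show "t ` lcar K1 \<subseteq> lcar K2" using t unfolding lsa_hom_def by blast
  next
    show "lcar K2 \<subseteq> t ` lcar K1"
    proof
      fix y assume y: "y \<in> lcar K2"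
      obtain x where x: "x \<in> lcar K1" and zd: "y - t x \<in> derived K2" using dec[OF y] by blast
      obtain w where w: "w \<in> lcar K1" and tw: "y - t x = t w" using der[OF zd] by blast
      have "y = t (x + w)" using hom_add[OF t x w] tw by (simp add: algebra_simps)
      then show "y \<in> t ` lcar K1" using ls_add[OF K1 x w] by blast
    qed
  qed
qed

theorem theorem4p6:
  fixes L :: "('k::field, 'l::ab_group_add) lsa"
    and T1 :: "('k, 'a::ab_group_add) lsa" and sig1 :: "'a \<Rightarrow> 'l"
    and T2 :: "('k, 'b::ab_group_add) lsa" and sig2 :: "'b \<Rightarrow> 'l"
  assumes "lie_superalgebra L" and "fin_dim L"
    and "(2::'k) \<noteq> 0" and "(3::'k) \<noteq> 0"
    and "universal_wrt TYPE('a) L T1 sig1" and "universal_wrt TYPE('b) L T1 sig1"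
    and "universal_wrt TYPE('l) L T1 sig1"
    and "universal_wrt TYPE('a) L T2 sig2" and "universal_wrt TYPE('b) L T2 sig2"
    and "universal_wrt TYPE('l) L T2 sig2"
  shows "lsa_iso T1 T2"
proof -
  note L = assms(1)
  have C1: "in_C L T1 sig1" and C2: "in_C L T2 sig2"
    using assms(5) assms(8) unfolding universal_wrt_def by auto
  obtain tau where tau: "lsa_hom T1 T2 tau" and ct: "\<forall>x\<in>lcar T1. sig2 (tau x) = sig1 x"
    using assms(6) C2 unfolding universal_wrt_def by blast
  obtain rho where rho: "lsa_hom T2 T1 rho" and cr: "\<forall>x\<in>lcar T2. sig1 (rho x) = sig2 x"
    using assms(8) C1 unfolding universal_wrt_def by blast
  have T1: "lie_superalgebra T1" and s1: "lsa_hom T1 L sig1" and s1s: "sig1 ` lcar T1 = lcar L"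
    and k1: "lsa_ker T1 sig1 \<subseteq> derived T1 \<inter> center T1" using C1 unfolding in_C_def by auto
  have T2: "lie_superalgebra T2" and s2: "lsa_hom T2 L sig2" and s2s: "sig2 ` lcar T2 = lcar L"
    and k2: "lsa_ker T2 sig2 \<subseteq> derived T2 \<inter> center T2" using C2 unfolding in_C_def by auto
  have comp: "lsa_hom T1 T1 (rho \<circ> tau)" using hom_comp[OF tau rho] .
  have cc: "\<forall>x\<in>lcar T1. sig1 ((rho \<circ> tau) x) = sig1 x"
    using ct cr hom_car[OF tau] by simp
  have "inj_on (rho \<circ> tau) (lcar T1)" using endo_inj[OF T1 L s1 k1 comp cc] .
  then have inj: "inj_on tau (lcar T1)" using inj_on_imageI2 by blast
  have sur: "tau ` lcar T1 = lcar T2" using hom_surj[OF T1 T2 L s1 s1s s2 k2 tau ct] .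
  show ?thesis unfolding lsa_iso_def using tau inj sur bij_betw_def by blast
qed

end
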